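(* Let $\tau:\mathcal A\to\mathcal A^+$ be a substitution satisfying the standing assumptions below, with one-sided subshift $(X_\tau,\sigma)$. Then: (i) every $y\in\tau(X_\tau)$ can be written in exactly one way as $y=\tau(x)$ with $x\in X_\tau$; (ii) every $y\in X_\tau\setminus\tau(X_\tau)$ can be written as $y=\sigma^k(\tau(x))$ with $x=x_0x_1\ldots\in X_\tau$ and $0<k<|\tau(x_0)|$, and in any such representation $\sigma(x)$ is uniquely determined by $y$ (i.e. if $y=\sigma^k(\tau(x))=\sigma^{k'}(\tau(x'))$ with $0<k<|\tau(x_0)|$ and $0<k'<|\tau(x'_0)|$, then $\sigma(x)=\sigma(x')$).
   Context: $\mathcal A$ is a finite alphabet, $\mathcal A^+$ the set of finite words over $\mathcal A$; for a word $w$, $|w|$ is its length and $w_{[i,j]}=w_i\cdots w_j$. A substitution $\tau:\mathcal A\to\mathcal A^+$ is extended to words and to one-sided sequences $x=x_0x_1\ldots\in\mathcal A^{\mathbb N}$ by concatenation, $\tau(x)=\tau(x_0)\tau(x_1)\cdots$. $\sigma$ is the left shift on $\mathcal A^{\mathbb N}$ (product of discrete topologies). A fixed point is $u\in\mathcal A^{\mathbb N}$ with $\tau(u)=u$, and $X_\tau$ is the closure of $\{\sigma^n(u):n\ge0\}$. Standing assumptions: $\tau$ is primitive (some $k$ such that every letter occurs in $\tau^k(a)$ for every $a$), $X_\tau$ is aperiodic (infinite), $\tau$ has a fixed point $u$, $\tau$ is (unilaterally) recognizable, and every power $\tau^n$ ($n\ge1$) is injective on letters. Recognizable means: with $E=\{0\}\cup\{|\tau(u_{[0,p-1]})|:p>0\}$,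 there is $L$ such that whenever $u_{[i,i+L-1]}=u_{[j,j+L-1]}$ and $i\in E$, then $j\in E$. *)

theory Defs
  imports Main
begin

definition subst_word :: "('a \<Rightarrow> 'a list) \<Rightarrow> 'a list \<Rightarrow> 'a list" where
  "subst_word \<tau> w = concat (map \<tau> w)"

definition pref :: "(nat \<Rightarrow> 'a) \<Rightarrow> nat \<Rightarrow> 'a list" where
  "pref x p = map x [0..<p]"

text \<open>Concatenation tau(x) = tau(x_0) tau(x_1) ... (for a substitution with nonempty images):
  the n-th letter lies in the block of the least p with |tau(x_[0,p])| > n.\<close>
definition subst_seq :: "('a \<Rightarrow> 'a list) \<Rightarrow> (nat \<Rightarrow> 'a) \<Rightarrow> (nat \<Rightarrow> 'a)" where
  "subst_seq \<tau> x n =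
     (let p = (LEAST p. n < length (subst_word \<tau> (pref x (Suc p)))) in
        \<tau> (x p) ! (n - length (subst_word \<tau> (pref x p))))"

definition shift :: "nat \<Rightarrow> (nat \<Rightarrow> 'a) \<Rightarrow> (nat \<Rightarrow> 'a)" where
  "shift k x = (\<lambda>n. x (n + k))"

text \<open>Closure of the orbit of u in the product of discrete topologies, unfolded via the
  cylinder-set basis: y is in the closure iff every cylinder around y meets the orbit.\<close>
definition subshift :: "(nat \<Rightarrow> 'a) \<Rightarrow> (nat \<Rightarrow> 'a) set" where
  "subshift u = {y. \<forall>N. \<exists>n. \<forall>i<N. u (n + i) = y i}"

definition primitive :: "('a \<Rightarrow> 'a list) \<Rightarrow> bool" where
  "primitive \<tau> \<longleftrightarrow> (\<exists>k. \<forall>a b. b \<in> set ((subst_word \<tau> ^^ k) [a]))"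

definition recog_set :: "('a \<Rightarrow> 'a list) \<Rightarrow> (nat \<Rightarrow> 'a) \<Rightarrow> nat set" where
  "recog_set \<tau> u = {0} \<union> {length (subst_word \<tau> (pref u p)) | p. p > 0}"

definition recognizable :: "('a \<Rightarrow> 'a list) \<Rightarrow> (nat \<Rightarrow> 'a) \<Rightarrow> bool" where
  "recognizable \<tau> u \<longleftrightarrow> (\<exists>L. \<forall>i j. (\<forall>t<L. u (i + t) = u (j + t)) \<and> i \<in> recog_set \<tau> u
        \<longrightarrow> j \<in> recog_set \<tau> u)"

end

theory Submission
  imports Defs
begin


definition blen :: "('a \<Rightarrow> 'a list) \<Rightarrow> (nat \<Rightarrow> 'a) \<Rightarrow> nat \<Rightarrow> nat" where
  "blen \<tau> x p = length (subst_word \<tau> (pref x p))"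

lemma blen_0[simp]: "blen \<tau> x 0 = 0"
  by (simp add: blen_def pref_def subst_word_def)

lemma blen_Suc: "blen \<tau> x (Suc p) = blen \<tau> x p + length (\<tau> (x p))"
  by (simp add: blen_def pref_def subst_word_def)

lemma blen_cong: "(\<forall>i<N. x i = z i) \<Longrightarrow> i \<le> N \<Longrightarrow> blen \<tau> x i = blen \<tau> z i"
  by (induction i) (auto simp: blen_Suc)

lemma blen_shift: "blen \<tau> x (p + i) = blen \<tau> x p + blen \<tau> (shift p x) i"
  by (induction i) (auto simp: blen_Suc shift_def add.commute)

lemma blen_le: "(\<forall>a. length (\<tau> a) \<le> K) \<Longrightarrow> blen \<tau> x p \<le> p * K"
  proof (induction p)
  case (Suc p) thus ?case using add_mono[of "blen \<tau> x p" "p*K" "length (\<tau> (x p))" K] by (simp add: blen_Suc)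
qed simp

context fixes \<tau> :: "'a \<Rightarrow> 'a list" assumes ne: "\<forall>a. \<tau> a \<noteq> []"
begin

lemma blen_strict: "strict_mono (blen \<tau> x)"
  unfolding strict_mono_Suc_iff using ne by (auto simp: blen_Suc)

lemma blen_ge: "p \<le> blen \<tau> x p"
  using blen_strict by (simp add: strict_mono_imp_increasing)

lemma block: "t < length (\<tau> (x p)) \<Longrightarrow> subst_seq \<tau> x (blen \<tau> x p + t) = \<tau> (x p) ! t"
proof -
  assume t: "t < length (\<tau> (x p))"
  have "(LEAST q. blen \<tau> x p + t < length (subst_word \<tau> (pref x (Suc q)))) = p"
  proof (rule Least_equality)
    show "blen \<tau> x p + t < length (subst_word \<tau> (pref x (Suc p)))"
      using t blen_Suc[of \<tau> x p] by (simp add: blen_def)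
  next
    fix q assume "blen \<tau> x p + t < length (subst_word \<tau> (pref x (Suc q)))"
    hence "blen \<tau> x p < blen \<tau> x (Suc q)" by (simp add: blen_def)
    hence "p < Suc q" using blen_strict strict_mono_less by blast
    thus "p \<le> q" by simp
  qed
  thus ?thesis by (simp add: subst_seq_def blen_def[symmetric])
qed

lemma decomp: "\<exists>p t. n = blen \<tau> x p + t \<and> t < length (\<tau> (x p))"
proof -
  have ex: "n < blen \<tau> x (Suc n)" using blen_ge[of "Suc n" x] by simp
  define p where "p = (LEAST p. n < blen \<tau> x (Suc p))"
  have p1: "n < blen \<tau> x (Suc p)" unfolding p_def by (rule LeastI[of _ n], rule ex)
  have p2: "blen \<tau> x p \<le> n"
  proof (cases p)
    case 0 thus ?thesis by simp
  next
    case (Suc q)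
    have "\<not> n < blen \<tau> x (Suc q)" using Suc p_def not_less_Least[of q "\<lambda>p. n < blen \<tau> x (Suc p)"] by simp
    thus ?thesis using Suc by simp
  qed
  show ?thesis using p1 p2 blen_Suc[of \<tau> x p]
    by (intro exI[of _ p] exI[of _ "n - blen \<tau> x p"]) auto
qed

lemma seq_cong: "(\<forall>i<N. x i = z i) \<Longrightarrow> n < blen \<tau> x N \<Longrightarrow> subst_seq \<tau> x n = subst_seq \<tau> z n"
proof -
  assume ag: "\<forall>i<N. x i = z i" and n: "n < blen \<tau> x N"
  obtain p t where pt: "n = blen \<tau> x p + t" "t < length (\<tau> (x p))" using decomp by blast
  have "blen \<tau> x p < blen \<tau> x N" using n pt by simp
  hence "p < N" using blen_strict strict_mono_less by blast
  hence "blen \<tau> x p = blen \<tau> z p" using ag blen_cong[of N x z p \<tau>] by simp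
  thus ?thesis using pt block[of t z p] block[of t x p] ag \<open>p < N\<close> by simp
qed

lemma seq_shift: "subst_seq \<tau> (shift p x) n = subst_seq \<tau> x (blen \<tau> x p + n)"
proof -
  obtain q t where qt: "n = blen \<tau> (shift p x) q + t" "t < length (\<tau> (shift p x q))" using decomp by blast
  have "blen \<tau> x p + n = blen \<tau> x (p + q) + t" using qt blen_shift[of \<tau> x p q] by simp
  moreover have "shift p x q = x (p + q)" by (simp add: shift_def add.commute)
  ultimately show ?thesis using qt block by metis
qed

lemma E_shift: "(blen \<tau> u p + d \<in> range (blen \<tau> u)) \<longleftrightarrow> d \<in> range (blen \<tau> (shift p u))"
proof
  assume "blen \<tau> u p + d \<in> range (blen \<tau> u)"
  then obtain q where q: "blen \<tau> u p + d = blen \<tau> u q" by auto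
  have "blen \<tau> u p \<le> blen \<tau> u q" using q by simp
  hence "p \<le> q" using blen_strict strict_mono_less_eq by blast
  then obtain i where "q = p + i" using le_Suc_ex by blast
  thus "d \<in> range (blen \<tau> (shift p u))" using q blen_shift[of \<tau> u p i] by auto
next
  assume "d \<in> range (blen \<tau> (shift p u))"
  then obtain i where "d = blen \<tau> (shift p u) i" by auto
  thus "blen \<tau> u p + d \<in> range (blen \<tau> u)" using blen_shift[of \<tau> u p i] by (metis rangeI)
qed

end

lemma recog_range: "recog_set \<tau> u = range (blen \<tau> u)"
  unfolding recog_set_def blen_def[symmetric]
proof (intro equalityI subsetI)
  fix e assume "e \<in> {0} \<union> {blen \<tau> u p |p. 0 < p}"
  thus "e \<in> range (blen \<tau> u)" using blen_0[of \<tau> u, symmetric] by (auto simp del: blen_0)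
next
  fix e assume "e \<in> range (blen \<tau> u)"
  then obtain p where "e = blen \<tau> u p" by auto
  thus "e \<in> {0} \<union> {blen \<tau> u p |p. 0 < p}" by (cases p) auto
qed

lemma fin_agree:
  fixes f g :: "nat \<Rightarrow> nat"
  assumes sf: "strict_mono f" and sg: "strict_mono g"
    and ag: "\<forall>m\<le>B. (m \<in> range f \<longleftrightarrow> m \<in> range g)"
  shows "f i \<le> B \<Longrightarrow> g i = f i"
proof (induction i rule: less_induct)
  case (less i)
  have IH: "\<forall>j<i. g j = f j"
  proof (intro allI impI)
    fix j assume "j < i"
    hence "f j < f i" using sf strict_mono_less by blast
    thus "g j = f j" using less.IH[OF \<open>j < i\<close>] less.prems by simp
  qed
  have "f i \<in> range g" using ag less.prems by auto
  then obtain m where m: "f i = g m" by auto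
  have "\<not> m < i"
  proof
    assume "m < i" hence "f m < f i" "g m = f m" using sf IH strict_mono_less by blast+
    thus False using m by simp
  qed
  hence gi: "g i \<le> f i" using m sg by (simp add: strict_mono_less_eq)
  hence "g i \<in> range f" using ag less.prems by auto
  then obtain m' where m': "g i = f m'" by auto
  have "\<not> m' < i"
  proof
    assume "m' < i" hence "g m' < g i" "g m' = f m'" using sg IH strict_mono_less by blast+
    thus False using m' by simp
  qed
  hence "f i \<le> g i" using m' sf by (simp add: strict_mono_less_eq)
  thus ?case using gi by simp
qed

lemma inf_agree:
  fixes f g :: "nat \<Rightarrow> nat"
  assumes "strict_mono f" "strict_mono g" "range f = range g"
  shows "f = g"
proof
  fix i show "f i = g i" using fin_agree[OF assms(1,2), of "f i" i] assms(3) by auto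
qed



context
  fixes \<tau> :: "'a::finite \<Rightarrow> 'a list" and u :: "nat \<Rightarrow> 'a" and L :: nat
  assumes ne: "\<forall>a. \<tau> a \<noteq> []"
    and fixpt: "subst_seq \<tau> u = u"
    and recL: "\<forall>i j. (\<forall>t<L. u (i + t) = u (j + t)) \<and> i \<in> range (blen \<tau> u) \<longrightarrow> j \<in> range (blen \<tau> u)"
    and injt: "inj \<tau>"
begin

definition Rc :: "(nat \<Rightarrow> 'a) \<Rightarrow> nat \<Rightarrow> bool" where
  "Rc y c \<longleftrightarrow> (\<exists>n\<in>range (blen \<tau> u). \<forall>t<L. u (n + t) = y (c + t))"

lemma Rc_iff: "\<forall>t<L. u (n + t) = y (c + t) \<Longrightarrow> (n \<in> range (blen \<tau> u) \<longleftrightarrow> Rc y c)"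
proof
  assume "\<forall>t<L. u (n + t) = y (c + t)" "n \<in> range (blen \<tau> u)"
  thus "Rc y c" unfolding Rc_def by blast
next
  assume occ: "\<forall>t<L. u (n + t) = y (c + t)" and "Rc y c"
  then obtain n' where n': "n' \<in> range (blen \<tau> u)" "\<forall>t<L. u (n' + t) = y (c + t)" unfolding Rc_def by blast
  have "\<forall>t<L. u (n' + t) = u (n + t)" using occ n' by simp
  thus "n \<in> range (blen \<tau> u)" using recL n' by blast
qed

lemma u_shift: "u (blen \<tau> u p + d) = subst_seq \<tau> (shift p u) d"
  using seq_shift[OF ne, of p u d] fixpt by simp

lemma KL:
  assumes x: "x \<in> subshift u" and y: "y = shift k (subst_seq \<tau> x)"
  shows "Rc y m \<longleftrightarrow> m + k \<in> range (blen \<tau> x)"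
proof -
  define N where "N = m + k + L + 1"
  obtain n0 where n0: "\<forall>i<N. u (n0 + i) = x i" using x unfolding subshift_def by blast
  define z where "z = shift n0 u"
  have zx: "\<forall>i<N. z i = x i" using n0 by (simp add: z_def shift_def add.commute)
  define n where "n = blen \<tau> u n0 + (m + k)"
  have occ: "\<forall>t<L. u (n + t) = y (m + t)"
  proof (intro allI impI)
    fix t assume t: "t < L"
    have "u (n + t) = subst_seq \<tau> z (m + k + t)"
      using u_shift[of n0 "m + k + t"] by (simp add: n_def z_def add.assoc)
    also have "\<dots> = subst_seq \<tau> x (m + k + t)"
    proof (rule seq_cong[OF ne])
      show "\<forall>i<N. z i = x i" by (rule zx)
      have "N \<le> blen \<tau> z N" by (rule blen_ge[OF ne])
      thus "m + k + t < blen \<tau> z N" using t by (simp add: N_def)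
    qed
    also have "\<dots> = y (m + t)" using y by (simp add: shift_def add.commute add.left_commute)
    finally show "u (n + t) = y (m + t)" .
  qed
  have "Rc y m \<longleftrightarrow> n \<in> range (blen \<tau> u)" using Rc_iff[OF occ] by simp
  also have "\<dots> \<longleftrightarrow> m + k \<in> range (blen \<tau> z)" unfolding n_def z_def by (rule E_shift[OF ne])
  also have "\<dots> \<longleftrightarrow> m + k \<in> range (blen \<tau> x)"
  proof -
    have bl: "i \<le> N \<Longrightarrow> blen \<tau> z i = blen \<tau> x i" for i using blen_cong[of N z x i \<tau>] zx by simp
    have "m + k \<in> range (blen \<tau> z) \<Longrightarrow> m + k \<in> range (blen \<tau> x)"
    proof -
      assume "m + k \<in> range (blen \<tau> z)"
      then obtain i where i: "m + k = blen \<tau> z i" by auto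
      have "i \<le> N" using blen_ge[OF ne, of i z] i by (simp add: N_def)
      thus ?thesis using i bl by auto
    qed
    moreover have "m + k \<in> range (blen \<tau> x) \<Longrightarrow> m + k \<in> range (blen \<tau> z)"
    proof -
      assume "m + k \<in> range (blen \<tau> x)"
      then obtain i where i: "m + k = blen \<tau> x i" by auto
      have "i \<le> N" using blen_ge[OF ne, of i x] i by (simp add: N_def)
      thus ?thesis using i bl by (metis rangeI)
    qed
    ultimately show ?thesis by blast
  qed
  finally show ?thesis .
qed

lemma read_block:
  assumes y: "y = shift k (subst_seq \<tau> x)" and k: "k \<le> blen \<tau> x j" and t: "t < length (\<tau> (x j))"
  shows "y (blen \<tau> x j - k + t) = \<tau> (x j) ! t"
proof -
  have "y (blen \<tau> x j - k + t) = subst_seq \<tau> x (blen \<tau> x j + t)"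
    using y k by (simp add: shift_def)
  thus ?thesis using block[OF ne, of t x j] t by simp
qed

lemma uniq1:
  assumes x: "x \<in> subshift u" and x': "x' \<in> subshift u" and eq: "subst_seq \<tau> x = subst_seq \<tau> x'"
  shows "x = x'"
proof -
  define y where "y = subst_seq \<tau> x"
  have y: "y = shift 0 (subst_seq \<tau> x)" "y = shift 0 (subst_seq \<tau> x')" using eq by (simp_all add: y_def shift_def)
  have "range (blen \<tau> x) = range (blen \<tau> x')"
    using KL[OF x y(1)] KL[OF x' y(2)] by auto
  hence bb: "blen \<tau> x = blen \<tau> x'" using inf_agree blen_strict[OF ne] by blast
  show "x = x'"
  proof
    fix j
    have len: "length (\<tau> (x j)) = length (\<tau> (x' j))"
      using bb blen_Suc[of \<tau> x j] blen_Suc[of \<tau> x' j] by (metis add_left_cancel)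
    have "\<tau> (x j) = \<tau> (x' j)"
    proof (rule nth_equalityI[OF len])
      fix t assume t: "t < length (\<tau> (x j))"
      show "\<tau> (x j) ! t = \<tau> (x' j) ! t"
        using read_block[OF y(1) _ t] read_block[OF y(2), of j t] t len bb by simp
    qed
    thus "x j = x' j" using injt by (simp add: inj_eq)
  qed
qed

lemma range_sh:
  assumes k0: "0 < k" and k: "k < blen \<tau> x 1"
  shows "range (\<lambda>i. blen \<tau> x (Suc i) - k) = {m. m + k \<in> range (blen \<tau> x)}"
proof (intro equalityI subsetI)
  fix m assume "m \<in> range (\<lambda>i. blen \<tau> x (Suc i) - k)"
  then obtain i where i: "m = blen \<tau> x (Suc i) - k" by auto
  have "blen \<tau> x 1 \<le> blen \<tau> x (Suc i)" using blen_strict[OF ne] by (simp add: strict_mono_less_eq)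
  hence "m + k = blen \<tau> x (Suc i)" using i k by simp
  thus "m \<in> {m. m + k \<in> range (blen \<tau> x)}" by simp
next
  fix m assume "m \<in> {m. m + k \<in> range (blen \<tau> x)}"
  then obtain q where q: "m + k = blen \<tau> x q" by auto
  then obtain i where "q = Suc i" using k0 by (cases q) auto
  hence "m = blen \<tau> x (Suc i) - k" using q by simp
  thus "m \<in> range (\<lambda>i. blen \<tau> x (Suc i) - k)" by (rule range_eqI)
qed

lemma sm_sh:
  assumes k: "k < blen \<tau> x 1"
  shows "strict_mono (\<lambda>i. blen \<tau> x (Suc i) - k)"
proof (rule strict_monoI)
  fix i j :: nat assume "i < j"
  hence "blen \<tau> x (Suc i) < blen \<tau> x (Suc j)" using blen_strict[OF ne] by (simp add: strict_mono_less)
  moreover have "blen \<tau> x 1 \<le> blen \<tau> x (Suc i)" using blen_strict[OF ne] by (simp add: strict_mono_less_eq)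
  ultimately show "blen \<tau> x (Suc i) - k < blen \<tau> x (Suc j) - k" using k by simp
qed

lemma uniq2:
  assumes x: "x \<in> subshift u" and x': "x' \<in> subshift u"
    and k: "0 < k" "k < length (\<tau> (x 0))" and k': "0 < k'" "k' < length (\<tau> (x' 0))"
    and y: "y = shift k (subst_seq \<tau> x)" and y': "y = shift k' (subst_seq \<tau> x')"
  shows "shift 1 x = shift 1 x'"
proof -
  have k1: "k < blen \<tau> x 1" using k blen_Suc[of \<tau> x 0] by simp
  have k1': "k' < blen \<tau> x' 1" using k' blen_Suc[of \<tau> x' 0] by simp
  define f where "f i = blen \<tau> x (Suc i) - k" for i
  define g where "g i = blen \<tau> x' (Suc i) - k'" for i
  have "range f = range g"
    unfolding f_def g_def range_sh[OF k(1) k1] range_sh[OF k'(1) k1'] using KL[OF x y] KL[OF x' y'] by auto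
  hence fg: "f = g" using inf_agree sm_sh[OF k1] sm_sh[OF k1'] unfolding f_def g_def by blast
  have fS: "blen \<tau> x (Suc i) = f i + k" for i
  proof -
    have "blen \<tau> x 1 \<le> blen \<tau> x (Suc i)" using blen_strict[OF ne] by (simp add: strict_mono_less_eq)
    thus ?thesis using k1 unfolding f_def by simp
  qed
  have gS: "blen \<tau> x' (Suc i) = g i + k'" for i
  proof -
    have "blen \<tau> x' 1 \<le> blen \<tau> x' (Suc i)" using blen_strict[OF ne] by (simp add: strict_mono_less_eq)
    thus ?thesis using k1' unfolding g_def by simp
  qed
  show ?thesis
  proof
    fix i
    have len: "length (\<tau> (x (Suc i))) = length (\<tau> (x' (Suc i)))"
      using blen_Suc[of \<tau> x "Suc i"] blen_Suc[of \<tau> x' "Suc i"] fS[of i] fS[of "Suc i"] gS[of i] gS[of "Suc i"] fg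
      by simp
    have "\<tau> (x (Suc i)) = \<tau> (x' (Suc i))"
    proof (rule nth_equalityI[OF len])
      fix t assume t: "t < length (\<tau> (x (Suc i)))"
      have a: "y (f i + t) = \<tau> (x (Suc i)) ! t" using read_block[OF y _ t] fS[of i] by simp
      have b: "y (g i + t) = \<tau> (x' (Suc i)) ! t" using read_block[OF y', of "Suc i" t] t len gS[of i] by simp
      show "\<tau> (x (Suc i)) ! t = \<tau> (x' (Suc i)) ! t" using a b fg by simp
    qed
    hence "x (Suc i) = x' (Suc i)" using injt by (simp add: inj_eq)
    thus "shift 1 x i = shift 1 x' i" by (simp add: shift_def)
  qed
qed


lemma small_range:
  assumes "k < length (\<tau> (w 0))" "m < k"
  shows "m \<in> range (blen \<tau> w) \<longleftrightarrow> m = 0"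
proof
  assume "m \<in> range (blen \<tau> w)"
  then obtain q where q: "m = blen \<tau> w q" by auto
  show "m = 0"
  proof (cases q)
    case 0 thus ?thesis using q by simp
  next
    case (Suc q')
    have "blen \<tau> w 1 \<le> blen \<tau> w q" using Suc blen_strict[OF ne] by (simp add: strict_mono_less_eq)
    thus ?thesis using q assms blen_Suc[of \<tau> w 0] by simp
  qed
next
  assume "m = 0" thus "m \<in> range (blen \<tau> w)" by (metis blen_0 rangeI)
qed

lemma existence:
  assumes y: "y \<in> subshift u" and ny: "y \<notin> subst_seq \<tau> ` subshift u"
  shows "\<exists>x k. x \<in> subshift u \<and> 0 < k \<and> k < length (\<tau> (x 0)) \<and> y = shift k (subst_seq \<tau> x)"
proof -
  define K where "K = Max (range (\<lambda>a. length (\<tau> a)))"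
  have Kb: "\<forall>a. length (\<tau> a) \<le> K" by (auto simp: K_def intro!: Max_ge)
  have "1 \<le> length (\<tau> undefined)" using ne by (simp add: Suc_le_eq)
  hence K1: "1 \<le> K" using Kb[rule_format, of undefined] by linarith
  define F where "F = {(k, a). k < length (\<tau> a)}"
  have "F \<subseteq> {..<K} \<times> UNIV" using Kb unfolding F_def by (auto intro: less_le_trans)
  hence finF: "finite F" by (rule finite_subset) auto
  define Q where "Q c M \<longleftrightarrow> (\<exists>p. u p = snd c \<and> (\<forall>i<M. u (blen \<tau> u p + fst c + i) = y i))" for c M
  have cover: "\<exists>c\<in>F. Q c M" for M
  proof -
    obtain n where n: "\<forall>i<M. u (n + i) = y i" using y unfolding subshift_def by blast
    obtain p t where pt: "n = blen \<tau> u p + t" "t < length (\<tau> (u p))" using decomp[OF ne] by blast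
    have "(t, u p) \<in> F" using pt unfolding F_def by simp
    moreover have "Q (t, u p) M" unfolding Q_def using n pt by auto
    ultimately show ?thesis by blast
  qed
  have anti: "Q c M \<Longrightarrow> M' \<le> M \<Longrightarrow> Q c M'" for c M M' unfolding Q_def by auto
  have "\<exists>c\<in>F. \<forall>M. Q c M"
  proof (rule ccontr)
    assume "\<not> ?thesis"
    hence "\<forall>c\<in>F. \<exists>M. \<not> Q c M" by blast
    from bchoice[OF this] obtain Mf where Mf: "\<forall>c\<in>F. \<not> Q c (Mf c)" by blast
    define M0 where "M0 = Max (Mf ` F)"
    obtain c where c: "c \<in> F" "Q c M0" using cover by blast
    have "Mf c \<le> M0" unfolding M0_def using finF c(1) by (auto intro: Max_ge)
    thus False using anti[OF c(2)] Mf c(1) by blast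
  qed
  then obtain k a where ka: "k < length (\<tau> a)" "\<forall>M. \<exists>p. u p = a \<and> (\<forall>i<M. u (blen \<tau> u p + k + i) = y i)"
    unfolding F_def Q_def by auto
  define P where "P M = (SOME p. u p = a \<and> (\<forall>i<M. u (blen \<tau> u p + k + i) = y i))" for M
  have P: "u (P M) = a \<and> (\<forall>i<M. u (blen \<tau> u (P M) + k + i) = y i)" for M
    unfolding P_def by (rule someI_ex) (use ka(2) in blast)
  define z where "z M = shift (P M) u" for M
  have z0: "z M 0 = a" for M using P by (simp add: z_def shift_def)
  have zy: "i < M \<Longrightarrow> subst_seq \<tau> (z M) (k + i) = y i" for M i
    using P[of M] u_shift[of "P M" "k + i"] by (simp add: z_def add.assoc)
  have zR: "c + L \<le> M \<Longrightarrow> (Rc y c \<longleftrightarrow> k + c \<in> range (blen \<tau> (z M)))" for c M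
  proof -
    assume cM: "c + L \<le> M"
    have occ: "\<forall>t<L. u (blen \<tau> u (P M) + (k + c) + t) = y (c + t)"
      using P[of M] cM by (auto simp: add.assoc)
    show ?thesis using Rc_iff[OF occ] E_shift[OF ne, of u "P M" "k + c"] by (simp add: z_def)
  qed
  define Mb where "Mb i = Suc i * K + L" for i
  have cons: "z M j = z M' j" if MM: "Mb i \<le> M" "Mb i \<le> M'" and ji: "j \<le> i" for i j M M'
  proof -
    define f where "f = blen \<tau> (z M)"
    define g where "g = blen \<tau> (z M')"
    define B where "B = Suc i * K + k"
    have agree: "\<forall>m\<le>B. (m \<in> range f \<longleftrightarrow> m \<in> range g)"
    proof (intro allI impI)
      fix m assume mB: "m \<le> B"
      show "m \<in> range f \<longleftrightarrow> m \<in> range g"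
      proof (cases "m < k")
        case True
        thus ?thesis unfolding f_def g_def using small_range[of k "z M" m] small_range[of k "z M'" m] z0 ka(1) by simp
      next
        case False
        define c where "c = m - k"
        have m: "m = k + c" using False c_def by simp
        have "c + L \<le> M" "c + L \<le> M'" using MM mB unfolding c_def B_def Mb_def by auto
        thus ?thesis using zR[of c M] zR[of c M'] m unfolding f_def g_def by simp
      qed
    qed
    have fg: "g j' = f j'" if "j' \<le> Suc i" for j'
    proof (rule fin_agree[OF _ _ agree])
      show "strict_mono f" "strict_mono g" unfolding f_def g_def by (rule blen_strict[OF ne])+
      have "f j' \<le> j' * K" unfolding f_def by (rule blen_le[OF Kb])
      also have "\<dots> \<le> Suc i * K" by (rule mult_le_mono1[OF that])
      finally show "f j' \<le> B" unfolding B_def by simp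
    qed
    show ?thesis
    proof (cases j)
      case 0 thus ?thesis using z0 by simp
    next
      case (Suc j0)
      have f1: "f 1 \<le> f j" using Suc blen_strict[OF ne] unfolding f_def by (simp add: strict_mono_less_eq)
      have fk: "k < f j" using f1 blen_Suc[of \<tau> "z M" 0] z0 ka(1) unfolding f_def by simp
      have fSj: "f (Suc j) = f j + length (\<tau> (z M j))" unfolding f_def by (rule blen_Suc)
      have gSj: "g (Suc j) = g j + length (\<tau> (z M' j))" unfolding g_def by (rule blen_Suc)
      have e1: "g j = f j" "g (Suc j) = f (Suc j)" using fg ji by auto
      have len: "length (\<tau> (z M j)) = length (\<tau> (z M' j))" using fSj gSj e1 by simp
      have fSB: "f (Suc j) \<le> B"
      proof -
        have "f (Suc j) \<le> Suc j * K" unfolding f_def by (rule blen_le[OF Kb])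
        also have "\<dots> \<le> Suc i * K" using ji by simp
        finally show ?thesis unfolding B_def by simp
      qed
      have "\<tau> (z M j) = \<tau> (z M' j)"
      proof (rule nth_equalityI[OF len])
        fix t assume t: "t < length (\<tau> (z M j))"
        have lt: "f j + t - k < M" "f j + t - k < M'" using fSj fSB t MM fk unfolding B_def Mb_def by auto
        have "\<tau> (z M j) ! t = subst_seq \<tau> (z M) (k + (f j + t - k))"
          using block[OF ne, of t "z M" j] t fk unfolding f_def by simp
        also have "\<dots> = y (f j + t - k)" using zy lt by simp
        also have "\<dots> = subst_seq \<tau> (z M') (k + (f j + t - k))" using zy lt by simp
        also have "\<dots> = \<tau> (z M' j) ! t"
          using block[OF ne, of t "z M'" j] t len fk e1 unfolding f_def g_def by simp
        finally show "\<tau> (z M j) ! t = \<tau> (z M' j) ! t" .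
      qed
      thus ?thesis using injt by (simp add: inj_eq)
    qed
  qed
  define x where "x i = z (Mb i) i" for i
  have Mbmono: "j \<le> N \<Longrightarrow> Mb j \<le> Mb N" for j N unfolding Mb_def by simp
  have xz: "j \<le> N \<Longrightarrow> x j = z (Mb N) j" for j N
    unfolding x_def using cons[of j "Mb j" "Mb N" j] Mbmono by simp
  have xX: "x \<in> subshift u"
    unfolding subshift_def
  proof (intro CollectI allI)
    fix N
    have "\<forall>i<N. u (P (Mb N) + i) = x i" using xz[of _ N] by (simp add: z_def shift_def add.commute)
    thus "\<exists>n. \<forall>i<N. u (n + i) = x i" by blast
  qed
  have yx: "y = shift k (subst_seq \<tau> x)"
  proof
    fix m
    define N where "N = m + k + 1"
    have ag: "\<forall>i<N. x i = z (Mb N) i" using xz by simp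
    have "m + k < blen \<tau> x N" using blen_ge[OF ne, of N x] unfolding N_def by simp
    hence "subst_seq \<tau> x (m + k) = subst_seq \<tau> (z (Mb N)) (k + m)"
      using seq_cong[OF ne ag] by (simp add: add.commute)
    also have "\<dots> = y m"
    proof (rule zy)
      have "N \<le> Suc N * K" using K1 mult_le_mono2[of 1 K "Suc N"] by simp
      thus "m < Mb N" unfolding Mb_def N_def by simp
    qed
    finally show "y m = shift k (subst_seq \<tau> x) m" by (simp add: shift_def)
  qed
  have x0: "x 0 = a" using xz[of 0 0] z0 by simp
  have "k \<noteq> 0"
  proof
    assume "k = 0"
    hence "y = subst_seq \<tau> x" using yx by (simp add: shift_def)
    thus False using ny xX by blast
  qed
  thus ?thesis using xX yx x0 ka(1) by blast
qed

end


theorem corollary3: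
  fixes \<tau> :: "'a::finite \<Rightarrow> 'a list" and u :: "nat \<Rightarrow> 'a"
  assumes nonempty: "\<forall>a. \<tau> a \<noteq> []"
    and prim: "primitive \<tau>"
    and aper: "infinite (subshift u)"
    and fixpt: "subst_seq \<tau> u = u"
    and recog: "recognizable \<tau> u"
    and inj_pow: "\<forall>n\<ge>1. inj (\<lambda>a. (subst_word \<tau> ^^ n) [a])"
  shows "(\<forall>y \<in> subst_seq \<tau> ` subshift u. \<exists>!x. x \<in> subshift u \<and> y = subst_seq \<tau> x)
    \<and> (\<forall>y \<in> subshift u - subst_seq \<tau> ` subshift u.
         (\<exists>x k. x \<in> subshift u \<and> 0 < k \<and> k < length (\<tau> (x 0)) \<and> y = shift k (subst_seq \<tau> x))
         \<and> (\<forall>x k x' k'. x \<in> subshift u \<and> 0 < k \<and> k < length (\<tau> (x 0)) \<and> y = shift k (subst_seq \<tau> x)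
              \<and> x' \<in> subshift u \<and> 0 < k' \<and> k' < length (\<tau> (x' 0)) \<and> y = shift k' (subst_seq \<tau> x')
              \<longrightarrow> shift 1 x = shift 1 x'))"
proof -
  obtain L where recL: "\<forall>i j. (\<forall>t<L. u (i + t) = u (j + t)) \<and> i \<in> range (blen \<tau> u) \<longrightarrow> j \<in> range (blen \<tau> u)"
    using recog unfolding recognizable_def recog_range by blast
  have injt: "inj \<tau>" using inj_pow[rule_format, of 1] by (simp add: subst_word_def)
  note U1 = uniq1[OF nonempty fixpt recL injt]
  note U2 = uniq2[OF nonempty fixpt recL injt]
  note EX = existence[OF nonempty fixpt recL injt]
  show ?thesis
  proof (intro conjI ballI allI impI)
    fix y assume "y \<in> subst_seq \<tau> ` subshift u"
    then obtain x where x: "x \<in> subshift u" "y = subst_seq \<tau> x" by blast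
    show "\<exists>!x. x \<in> subshift u \<and> y = subst_seq \<tau> x"
      using x U1 by blast
  next
    fix y assume "y \<in> subshift u - subst_seq \<tau> ` subshift u"
    thus "\<exists>x k. x \<in> subshift u \<and> 0 < k \<and> k < length (\<tau> (x 0)) \<and> y = shift k (subst_seq \<tau> x)"
      using EX by blast
  next
    fix y x k x' k'
    assume "x \<in> subshift u \<and> 0 < k \<and> k < length (\<tau> (x 0)) \<and> y = shift k (subst_seq \<tau> x)
              \<and> x' \<in> subshift u \<and> 0 < k' \<and> k' < length (\<tau> (x' 0)) \<and> y = shift k' (subst_seq \<tau> x')"
    thus "shift 1 x = shift 1 x'" using U2 by blast
  qed
qed

end
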